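(* Let $g\colon M^2\to\mathbb{R}^4$ be a simply connected oriented conformal minimal immersion with complex structure $J$, and let $h\colon M^2\to\mathbb{R}^4$ satisfy $h_*=g_*\circ J$. Suppose $g+ih$ takes values in the quadric $\{Z\in\mathbb{C}^4:\langle\!\langle Z,Z\rangle\!\rangle=0\}$, i.e. $\langle g,h\rangle\equiv0$ and $\|g\|\equiv\|h\|$. Then there is an orthogonal complex structure $\mathcal{J}$ on $\mathbb{R}^4$ (a linear isometry with $\mathcal{J}^2=-I$) such that $g$ is holomorphic with respect to $\mathcal{J}$ (i.e. $g_*\circ J=\mathcal{J}\circ g_*$) and $h=\mathcal{J}g$.
   Context: $\langle\!\langle Z,W\rangle\!\rangle=\sum_jz_jw_j$ is the complex bilinear inner product on $\mathbb{C}^4$; for $Z=U+iV$, $\langle\!\langle Z,Z\rangle\!\rangle=\|U\|^2-\|V\|^2+2i\langle U,V\rangle$. *)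

theory Defs
  imports "HOL-Analysis.Analysis"
begin

text \<open>The surface M is modelled (via uniformization; a compact surface admits no
minimal immersion into R^4) as a simply connected open domain U of the complex
plane with its standard orientation and complex structure J v = i * v.
dmap f z is the differential f_* at z.\<close>

definition dmap :: "(complex \<Rightarrow> 'b::real_normed_vector) \<Rightarrow> complex \<Rightarrow> complex \<Rightarrow> 'b" where
  "dmap f z = frechet_derivative f (at z)"

definition conformal_immersion :: "complex set \<Rightarrow> (complex \<Rightarrow> real^4) \<Rightarrow> bool" where
  "conformal_immersion U g \<longleftrightarrow> open U \<and>
     (\<forall>z\<in>U. g differentiable (at z) \<and>
        norm (dmap g z 1) = norm (dmap g z \<i>) \<and>
        dmap g z 1 \<bullet> dmap g z \<i> = 0 \<and>
        dmap g z 1 \<noteq> 0)"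

definition mean_curvature_vector :: "(complex \<Rightarrow> real^4) \<Rightarrow> complex \<Rightarrow> real^4" where
  "mean_curvature_vector g z =
     (1 / (2 * (norm (dmap g z 1))\<^sup>2)) *\<^sub>R
       (dmap (\<lambda>w. dmap g w 1) z 1 + dmap (\<lambda>w. dmap g w \<i>) z \<i>)"

definition conformal_minimal_immersion :: "complex set \<Rightarrow> (complex \<Rightarrow> real^4) \<Rightarrow> bool" where
  "conformal_minimal_immersion U g \<longleftrightarrow> conformal_immersion U g \<and>
     (\<forall>z\<in>U. (\<lambda>w. dmap g w 1) differentiable (at z) \<and>
             (\<lambda>w. dmap g w \<i>) differentiable (at z) \<and>
             mean_curvature_vector g z = 0)"

end

theory Submission
  imports Defs "HOL-Complex_Analysis.Complex_Analysis"
begin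


definition mkv :: "real \<Rightarrow> real \<Rightarrow> real \<Rightarrow> real \<Rightarrow> real^4" where
  "mkv a b c d = (\<chi> i. if i = 1 then a else if i = 2 then b else if i = 3 then c else d)"

lemma mkv_nth [simp]: "mkv a b c d $ 1 = a" "mkv a b c d $ 2 = b" "mkv a b c d $ 3 = c" "mkv a b c d $ 4 = d"
  by (simp_all add: mkv_def)

lemma vec4_eq: "(x::real^4) = y \<longleftrightarrow> x$1 = y$1 \<and> x$2 = y$2 \<and> x$3 = y$3 \<and> x$4 = y$4"
  by (simp add: vec_eq_iff forall_4)

lemma norm4: "(norm (x::real^4))^2 = (x$1)^2 + (x$2)^2 + (x$3)^2 + (x$4)^2"
  by (simp only: power2_norm_eq_inner) (simp add: inner_vec_def sum_4 power2_eq_square)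

definition W :: "real^4 \<Rightarrow> complex" where "W x = Complex (x$1) (x$2)"
definition V :: "real^4 \<Rightarrow> complex" where "V x = Complex (x$3) (x$4)"

lemma WV_add: "W (x + y) = W x + W y" "V (x + y) = V x + V y"
  "W (x - y) = W x - W y" "V (x - y) = V x - V y" "W (-x) = - W x" "V (-x) = - V x"
  "W (c *\<^sub>R x) = of_real c * W x" "V (c *\<^sub>R x) = of_real c * V x"
  by (simp_all add: W_def V_def complex_eq_iff)

lemma WV_zero: "W x = 0 \<Longrightarrow> V x = 0 \<Longrightarrow> x = 0"
  by (simp add: W_def V_def complex_eq_iff vec4_eq)

lemma WV_mkv [simp]: "W (mkv a b c d) = Complex a b" "V (mkv a b c d) = Complex c d"
  by (simp_all add: W_def V_def)

lemma norm_WV: "(norm x)^2 = (cmod (W x))^2 + (cmod (V x))^2"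
  by (simp add: norm4 W_def V_def cmod_power2)

definition nn :: "complex \<Rightarrow> complex \<Rightarrow> complex" where "nn p q = p*cnj p + q*cnj q"
definition rr :: "complex \<Rightarrow> complex \<Rightarrow> complex" where "rr p q = q*cnj q - p*cnj p"
definition ss :: "complex \<Rightarrow> complex \<Rightarrow> complex" where "ss p q = cnj p * q"
definition wc where "wc p q a = \<i>*(rr p q*W a - 2 * ss p q*V a)/nn p q"
definition vc where "vc p q a = -\<i>*(2 * cnj (ss p q)*W a + rr p q*V a)/nn p q"
definition JR :: "complex \<Rightarrow> complex \<Rightarrow> real^4 \<Rightarrow> real^4" where
  "JR p q a = mkv (Re (wc p q a)) (Im (wc p q a)) (Re (vc p q a)) (Im (vc p q a))"
definition K1 where "K1 p q x = W x * p + V x * q"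
definition K2 where "K2 p q x = - cnj (V x) * p + cnj (W x) * q"

lemma nn_real: "nn p q = of_real ((cmod p)^2 + (cmod q)^2)"
  unfolding nn_def complex_mult_cnj cmod_power2 by simp

lemma nn_nz: "(p,q) \<noteq> (0,0) \<Longrightarrow> nn p q \<noteq> 0"
  unfolding nn_real of_real_eq_0_iff by (auto simp: add_nonneg_eq_0_iff)

lemma cnj_nn: "cnj (nn p q) = nn p q" and cnj_rr: "cnj (rr p q) = rr p q"
  by (simp_all add: nn_def rr_def mult.commute)

lemma W_JR: "W (JR p q a) = wc p q a" and V_JR: "V (JR p q a) = vc p q a"
  by (simp_all add: JR_def)

lemma K1_JR: assumes "(p,q) \<noteq> (0,0)" shows "K1 p q (JR p q a) = -\<i> * K1 p q a"
proof -
  have n: "nn p q \<noteq> 0" using nn_nz[OF assms] .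
  show ?thesis unfolding K1_def W_JR V_JR wc_def vc_def using n
    by (simp add: field_simps) (simp add: nn_def rr_def ss_def algebra_simps)
qed

lemma K2_JR: assumes "(p,q) \<noteq> (0,0)" shows "K2 p q (JR p q a) = -\<i> * K2 p q a"
proof -
  have n: "nn p q \<noteq> 0" using nn_nz[OF assms] .
  show ?thesis unfolding K2_def W_JR V_JR wc_def vc_def using n
    by (simp add: field_simps cnj_nn cnj_rr) (simp add: nn_def rr_def ss_def algebra_simps)
qed

lemma WV_eq: "W x = W y \<Longrightarrow> V x = V y \<Longrightarrow> x = y"
  using WV_zero[of "x - y"] by (simp add: WV_add)

lemma K_lin: "K1 p q (x + y) = K1 p q x + K1 p q y" "K2 p q (x + y) = K2 p q x + K2 p q y"
  "K1 p q (x - y) = K1 p q x - K1 p q y" "K2 p q (x - y) = K2 p q x - K2 p q y"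
  by (simp_all add: K1_def K2_def WV_add algebra_simps)

lemma K_kill: assumes "K1 p q d = 0" "K2 p q d = 0" "(p,q) \<noteq> (0,0)" shows "d = 0"
proof -
  define w where "w = W d"
  define v where "v = V d"
  have e1: "w * p + v * q = 0" and e2: "- cnj v * p + cnj w * q = 0"
    using assms(1,2) by (simp_all add: K1_def K2_def w_def v_def)
  have "(w * cnj w + v * cnj v) * p = cnj w * (w * p + v * q) - v * (- cnj v * p + cnj w * q)"
    by (simp add: algebra_simps)
  also have "\<dots> = 0" using e1 e2 by simp
  finally have a: "(w * cnj w + v * cnj v) * p = 0" .
  have "(w * cnj w + v * cnj v) * q = cnj v * (w * p + v * q) + w * (- cnj v * p + cnj w * q)"
    by (simp add: algebra_simps)
  also have "\<dots> = 0" using e1 e2 by simp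
  finally have b: "(w * cnj w + v * cnj v) * q = 0" .
  have "w * cnj w + v * cnj v = 0" using a b assms(3) by auto
  moreover have "complex_of_real ((cmod w)^2 + (cmod v)^2) = w * cnj w + v * cnj v"
    by (simp only: of_real_add complex_norm_square)
  ultimately have "complex_of_real ((cmod w)^2 + (cmod v)^2) = 0" by simp
  hence "(cmod w)^2 + (cmod v)^2 = 0" by (simp only: of_real_eq_0_iff)
  hence "w = 0" "v = 0" by (auto simp: add_nonneg_eq_0_iff)
  thus ?thesis using WV_zero w_def v_def by metis
qed

lemma JR_lin1: "JR p q (x + y) = JR p q x + JR p q y"
  by (rule WV_eq) (simp_all add: W_JR V_JR WV_add wc_def vc_def divide_inverse algebra_simps)

lemma JR_lin2: "JR p q (c *\<^sub>R x) = c *\<^sub>R JR p q x"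
  by (rule WV_eq) (simp_all add: W_JR V_JR WV_add wc_def vc_def divide_inverse algebra_simps)

lemmas JR_lin = JR_lin1 JR_lin2

lemma K_neg: "K1 p q (- x) = - K1 p q x" "K2 p q (- x) = - K2 p q x"
  by (simp_all add: K1_def K2_def WV_add algebra_simps)

lemma JR_linear: "linear (JR p q)"
  by (rule linearI) (simp_all add: JR_lin)

lemma JR_JR: assumes "(p,q) \<noteq> (0,0)" shows "JR p q (JR p q a) = - a"
proof -
  have "JR p q (JR p q a) - (- a) = 0"
    by (rule K_kill[OF _ _ assms]) (simp_all add: K_lin K_neg K1_JR[OF assms] K2_JR[OF assms])
  thus ?thesis by (simp add: eq_neg_iff_add_eq_0)
qed

lemma JR_norm: assumes "(p,q) \<noteq> (0,0)" shows "norm (JR p q a) = norm a"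
proof -
  have n: "nn p q \<noteq> 0" using nn_nz[OF assms] .
  have "complex_of_real ((cmod (wc p q a))^2 + (cmod (vc p q a))^2) = complex_of_real ((cmod (W a))^2 + (cmod (V a))^2)"
    unfolding of_real_add complex_norm_square wc_def vc_def complex_cnj_divide complex_cnj_mult complex_cnj_add
      complex_cnj_diff cnj_nn cnj_rr complex_cnj_minus complex_cnj_i complex_cnj_cnj
    using n by (simp add: field_simps) (simp add: nn_def rr_def ss_def algebra_simps)
  hence "(norm (JR p q a))^2 = (norm a)^2"
    by (simp only: of_real_eq_iff norm_WV W_JR V_JR)
  thus ?thesis by (simp add: power2_eq_iff_nonneg)
qed

lemma JR_main: assumes "(p,q) \<noteq> (0,0)"
  shows "\<exists>J::real^4 \<Rightarrow> real^4. linear J \<and> (\<forall>x. norm (J x) = norm x) \<and> (\<forall>x. J (J x) = - x) \<and>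
     (\<forall>a b. K1 p q a = \<i> * K1 p q b \<and> K2 p q a = \<i> * K2 p q b \<longrightarrow> J a = b)"
proof (intro exI[of _ "JR p q"] conjI allI impI)
  show "linear (JR p q)" by (rule JR_linear)
  show "norm (JR p q x) = norm x" for x using JR_norm[OF assms] .
  show "JR p q (JR p q x) = - x" for x using JR_JR[OF assms] .
  fix a b assume h: "K1 p q a = \<i> * K1 p q b \<and> K2 p q a = \<i> * K2 p q b"
  have "b - JR p q a = 0"
    by (rule K_kill[OF _ _ assms]) (use h in \<open>simp_all add: K_lin K1_JR[OF assms] K2_JR[OF assms]\<close>)
  thus "JR p q a = b" by simp
qed

definition sig :: "real^4 \<Rightarrow> real^4" where "sig x = mkv (x$1) (x$2) (- x$3) (x$4)"

lemma sig_sig [simp]: "sig (sig x) = x" by (simp add: sig_def vec4_eq)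
lemma sig_norm: "norm (sig x) = norm x"
proof -
  have "(norm (sig x))^2 = (norm x)^2" by (simp add: norm4 sig_def)
  thus ?thesis by (simp add: power2_eq_iff_nonneg)
qed
lemma sig_linear: "linear sig"
  by (rule linearI) (simp_all add: sig_def vec4_eq)
lemma sig_neg: "sig (- x) = - sig x" by (simp add: sig_def vec4_eq)

definition L1 where "L1 p q x = W x * p + (- cnj (V x)) * q"
definition L2 where "L2 p q x = V x * p + cnj (W x) * q"

lemma K_sig: "K1 p q (sig x) = L1 p q x" "K2 p q (sig x) = L2 p q x"
  by (simp_all add: K1_def K2_def L1_def L2_def sig_def W_def V_def complex_eq_iff)

lemma JC_main: assumes "(p,q) \<noteq> (0,0)"
  shows "\<exists>J::real^4 \<Rightarrow> real^4. linear J \<and> (\<forall>x. norm (J x) = norm x) \<and> (\<forall>x. J (J x) = - x) \<and>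
     (\<forall>a b. L1 p q a = \<i> * L1 p q b \<and> L2 p q a = \<i> * L2 p q b \<longrightarrow> J a = b)"
proof -
  obtain J where J: "linear J" "\<forall>x. norm (J x) = norm x" "\<forall>x. J (J x) = - x"
     "\<forall>a b. K1 p q a = \<i> * K1 p q b \<and> K2 p q a = \<i> * K2 p q b \<longrightarrow> J a = b"
    using JR_main[OF assms] by blast
  show ?thesis
  proof (intro exI[of _ "sig \<circ> J \<circ> sig"] conjI allI impI)
    show "linear (sig \<circ> J \<circ> sig)" using J(1) sig_linear by (intro linear_compose)
    show "norm ((sig \<circ> J \<circ> sig) x) = norm x" for x using J(2) by (simp add: sig_norm)
    show "(sig \<circ> J \<circ> sig) ((sig \<circ> J \<circ> sig) x) = - x" for x using J(3) by (simp add: sig_neg)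
    fix a b assume h: "L1 p q a = \<i> * L1 p q b \<and> L2 p q a = \<i> * L2 p q b"
    hence "J (sig a) = sig b" using J(4) by (simp add: K_sig)
    thus "(sig \<circ> J \<circ> sig) a = b" by simp
  qed
qed



lemma nz_ball:
  assumes "continuous_on S f" "open S" "z1 \<in> S" "f z1 \<noteq> (0::complex)"
  shows "\<exists>e>0. ball z1 e \<subseteq> S \<and> (\<forall>z\<in>ball z1 e. f z \<noteq> 0)"
proof -
  obtain e1 where e1: "e1 > 0" "\<forall>y. dist z1 y < e1 \<longrightarrow> f y \<noteq> 0"
    using continuous_on_open_avoid[OF assms] by blast
  obtain e2 where e2: "e2 > 0" "ball z1 e2 \<subseteq> S"
    using assms(2,3) open_contains_ball by blast
  show ?thesis
    by (rule exI[of _ "min e1 e2"]) (use e1 e2 in auto)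
qed

lemma zero_on_ball:
  assumes "f holomorphic_on S" "open S" "connected S" "e > 0" "ball z1 e \<subseteq> S"
    "\<forall>z\<in>ball z1 e. f z = 0"
  shows "\<forall>z\<in>S. f z = 0"
proof
  fix z assume "z \<in> S"
  show "f z = 0"
    by (rule analytic_continuation_open[of "ball z1 e" S f "\<lambda>_. 0"])
       (use assms \<open>z \<in> S\<close> in auto)
qed

lemma holo_zero_prod:
  assumes "f holomorphic_on S" "g holomorphic_on S" "open S" "connected S"
    "\<forall>z\<in>S. f z * g z = 0" "z1 \<in> S" "f z1 \<noteq> 0"
  shows "\<forall>z\<in>S. g z = 0"
proof -
  obtain e where e: "e > 0" "ball z1 e \<subseteq> S" "\<forall>z\<in>ball z1 e. f z \<noteq> 0"
    using nz_ball[OF holomorphic_on_imp_continuous_on[OF assms(1)] assms(3,6,7)] by blast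
  have "\<forall>z\<in>ball z1 e. g z = 0" using e assms(5) by auto
  thus ?thesis using zero_on_ball[OF assms(2,3,4) e(1,2)] by blast
qed

lemma deriv_zero_of_zero:
  assumes "(f has_field_derivative D) (at z)" "open S" "z \<in> S" "\<forall>w\<in>S. f w = 0"
  shows "D = 0"
proof -
  have "((\<lambda>_. 0) has_field_derivative D) (at z)"
    by (rule has_field_derivative_transform_within_open[OF assms(1,2,3)]) (use assms(4) in auto)
  thus ?thesis using DERIV_unique DERIV_const by blast
qed

lemma KER1:
  fixes a b c d A B C D :: "complex \<Rightarrow> complex"
  assumes S: "open S" "connected S" "z0 \<in> S"
    and da: "\<forall>z\<in>S. (a has_field_derivative A z) (at z)"
    and db: "\<forall>z\<in>S. (b has_field_derivative B z) (at z)"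
    and dc: "\<forall>z\<in>S. (c has_field_derivative C z) (at z)"
    and dd: "\<forall>z\<in>S. (d has_field_derivative D z) (at z)"
    and det: "\<forall>z\<in>S. a z * d z = b z * c z"
    and wr: "\<forall>z\<in>S. a z * B z = b z * A z"
    and nz: "a z0 \<noteq> 0"
  shows "\<forall>z\<in>S. a z * b z0 = b z * a z0 \<and> c z * b z0 = d z * a z0 \<and>
                A z * b z0 = B z * a z0 \<and> C z * b z0 = D z * a z0"
proof -
  have ha: "a holomorphic_on S" using da S by (auto simp: holomorphic_on_open)
  have hb: "b holomorphic_on S" using db S by (auto simp: holomorphic_on_open)
  have hc: "c holomorphic_on S" using dc S by (auto simp: holomorphic_on_open)
  have hd: "d holomorphic_on S" using dd S by (auto simp: holomorphic_on_open)
  obtain e where e: "e > 0" "ball z0 e \<subseteq> S" "\<forall>z\<in>ball z0 e. a z \<noteq> 0"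
    using nz_ball[OF holomorphic_on_imp_continuous_on[OF ha] S(1,3) nz] by blast
  have "\<exists>k. \<forall>z\<in>ball z0 e. b z / a z = k"
  proof (rule has_field_derivative_zero_constant)
    show "convex (ball z0 e)" by simp
    fix z assume z: "z \<in> ball z0 e"
    hence zS: "z \<in> S" using e by auto
    have "((\<lambda>z. b z / a z) has_field_derivative (B z * a z - b z * A z) / (a z * a z)) (at z)"
      by (rule DERIV_divide) (use db da zS e z in auto)
    moreover have "B z * a z - b z * A z = 0" using wr zS by (simp add: mult.commute)
    ultimately show "((\<lambda>z. b z / a z) has_field_derivative 0) (at z within ball z0 e)"
      by (simp add: has_field_derivative_at_within)
  qed
  then obtain k where k: "\<forall>z\<in>ball z0 e. b z / a z = k" by blast
  have z0b: "z0 \<in> ball z0 e" using e by simp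
  have r1: "\<forall>z\<in>ball z0 e. a z * b z0 - b z * a z0 = 0"
  proof
    fix z assume z: "z \<in> ball z0 e"
    have "b z / a z = b z0 / a z0" using k z z0b by auto
    thus "a z * b z0 - b z * a z0 = 0" using e(3) z nz by (simp add: field_simps)
  qed
  have r2: "\<forall>z\<in>ball z0 e. c z * b z0 - d z * a z0 = 0"
  proof
    fix z assume z: "z \<in> ball z0 e"
    hence zS: "z \<in> S" using e by auto
    have "a z * (c z * b z0 - d z * a z0) = c z * (a z * b z0 - b z * a z0)"
      using det zS by (simp add: algebra_simps)
    also have "\<dots> = 0" using r1 z by simp
    finally show "c z * b z0 - d z * a z0 = 0" using e(3) z by simp
  qed
  have h1: "(\<lambda>z. a z * b z0 - b z * a z0) holomorphic_on S" using ha hb by (intro holomorphic_intros)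
  have h2: "(\<lambda>z. c z * b z0 - d z * a z0) holomorphic_on S" using hc hd by (intro holomorphic_intros)
  have R1: "\<forall>z\<in>S. a z * b z0 - b z * a z0 = 0"
    using zero_on_ball[OF h1 S(1,2) e(1,2)] r1 by blast
  have R2: "\<forall>z\<in>S. c z * b z0 - d z * a z0 = 0"
    using zero_on_ball[OF h2 S(1,2) e(1,2)] r2 by blast
  show ?thesis
  proof
    fix z assume zS: "z \<in> S"
    have D1: "((\<lambda>z. a z * b z0 - b z * a z0) has_field_derivative A z * b z0 - B z * a z0) (at z)"
      using da db zS by (auto intro!: derivative_eq_intros)
    have D2: "((\<lambda>z. c z * b z0 - d z * a z0) has_field_derivative C z * b z0 - D z * a z0) (at z)"
      using dc dd zS by (auto intro!: derivative_eq_intros)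
    have "A z * b z0 - B z * a z0 = 0" by (rule deriv_zero_of_zero[OF D1 S(1) zS R1])
    moreover have "C z * b z0 - D z * a z0 = 0" by (rule deriv_zero_of_zero[OF D2 S(1) zS R2])
    ultimately show "a z * b z0 = b z * a z0 \<and> c z * b z0 = d z * a z0 \<and>
                A z * b z0 = B z * a z0 \<and> C z * b z0 = D z * a z0"
      using R1 R2 zS by auto
  qed
qed

lemma KER:
  fixes a b c d A B C D :: "complex \<Rightarrow> complex"
  assumes S: "open S" "connected S" "z0 \<in> S"
    and da: "\<forall>z\<in>S. (a has_field_derivative A z) (at z)"
    and db: "\<forall>z\<in>S. (b has_field_derivative B z) (at z)"
    and dc: "\<forall>z\<in>S. (c has_field_derivative C z) (at z)"
    and dd: "\<forall>z\<in>S. (d has_field_derivative D z) (at z)"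
    and det: "\<forall>z\<in>S. a z * d z = b z * c z"
    and wr1: "\<forall>z\<in>S. a z * B z = b z * A z"
    and wr2: "\<forall>z\<in>S. c z * D z = d z * C z"
    and nz: "a z0 \<noteq> 0 \<or> b z0 \<noteq> 0 \<or> c z0 \<noteq> 0 \<or> d z0 \<noteq> 0"
  shows "\<exists>p q. (p,q) \<noteq> (0,0) \<and> (\<forall>z\<in>S. a z * p + b z * q = 0 \<and> c z * p + d z * q = 0 \<and>
                A z * p + B z * q = 0 \<and> C z * p + D z * q = 0)"
proof -
  have detb: "\<forall>z\<in>S. b z * c z = a z * d z" using det by auto
  have detc: "\<forall>z\<in>S. c z * b z = d z * a z" using det by (auto simp: mult.commute)
  have detd: "\<forall>z\<in>S. d z * a z = c z * b z" using det by (auto simp: mult.commute)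
  have wr1b: "\<forall>z\<in>S. b z * A z = a z * B z" using wr1 by auto
  have wr2b: "\<forall>z\<in>S. d z * C z = c z * D z" using wr2 by auto
  consider "a z0 \<noteq> 0" | "b z0 \<noteq> 0" | "c z0 \<noteq> 0" | "d z0 \<noteq> 0" using nz by blast
  thus ?thesis
  proof cases
    case 1
    from KER1[OF S da db dc dd det wr1 1] show ?thesis
      by (intro exI[of _ "b z0"] exI[of _ "- a z0"]) (use 1 in \<open>auto simp: algebra_simps\<close>)
  next
    case 2
    from KER1[OF S db da dd dc detb wr1b 2] show ?thesis
      by (intro exI[of _ "b z0"] exI[of _ "- a z0"]) (use 2 in \<open>auto simp: algebra_simps\<close>)
  next
    case 3
    from KER1[OF S dc dd da db detc wr2 3] show ?thesis
      by (intro exI[of _ "d z0"] exI[of _ "- c z0"]) (use 3 in \<open>auto simp: algebra_simps\<close>)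
  next
    case 4
    from KER1[OF S dd dc db da detd wr2b 4] show ?thesis
      by (intro exI[of _ "d z0"] exI[of _ "- c z0"]) (use 4 in \<open>auto simp: algebra_simps\<close>)
  qed
qed

lemma prods:
  fixes a b c d A B C D :: complex
  assumes "a * d = b * c" "a * D + A * d = b * C + B * c" "A * D = B * C"
  shows "(a*B - b*A) * (a*C - c*A) = 0" "(a*B - b*A) * (b*D - d*B) = 0"
        "(c*D - d*C) * (a*C - c*A) = 0" "(c*D - d*C) * (b*D - d*B) = 0"
proof -
  have i2: "a * D + A * d - b * C - B * c = 0" using assms(2) by simp
  have i1: "b * c - a * d = 0" using assms(1) by simp
  have g: "A * D - B * C = 0" using assms(3) by simp
  have "(a*B - b*A) * (a*C - c*A) = - (a*a) * (A * D - B * C) + a*A*(a * D + A * d - b * C - B * c) + A*A*(b * c - a * d)"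
    by (simp add: algebra_simps)
  thus "(a*B - b*A) * (a*C - c*A) = 0" using i1 i2 g by simp
  have "(a*B - b*A) * (b*D - d*B) = - (b*b) * (A * D - B * C) + b*B*(a * D + A * d - b * C - B * c) + B*B*(b * c - a * d)"
    by (simp add: algebra_simps)
  thus "(a*B - b*A) * (b*D - d*B) = 0" using i1 i2 g by simp
  have "(c*D - d*C) * (a*C - c*A) = - (c*c) * (A * D - B * C) + c*C*(a * D + A * d - b * C - B * c) + C*C*(b * c - a * d)"
    by (simp add: algebra_simps)
  thus "(c*D - d*C) * (a*C - c*A) = 0" using i1 i2 g by simp
  have "(c*D - d*C) * (b*D - d*B) = - (d*d) * (A * D - B * C) + d*D*(a * D + A * d - b * C - B * c) + D*D*(b * c - a * d)"
    by (simp add: algebra_simps)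
  thus "(c*D - d*C) * (b*D - d*B) = 0" using i1 i2 g by simp
qed

lemma CORE:
  fixes a b c d A B C D :: "complex \<Rightarrow> complex"
  assumes S: "open S" "connected S" "S \<noteq> {}"
    and da: "\<forall>z\<in>S. (a has_field_derivative A z) (at z)"
    and db: "\<forall>z\<in>S. (b has_field_derivative B z) (at z)"
    and dc: "\<forall>z\<in>S. (c has_field_derivative C z) (at z)"
    and dd: "\<forall>z\<in>S. (d has_field_derivative D z) (at z)"
    and hA: "A holomorphic_on S" and hB: "B holomorphic_on S"
    and hC: "C holomorphic_on S" and hD: "D holomorphic_on S"
    and det: "\<forall>z\<in>S. a z * d z = b z * c z"
    and i2: "\<forall>z\<in>S. a z * D z + A z * d z = b z * C z + B z * c z"
    and detG: "\<forall>z\<in>S. A z * D z = B z * C z"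
    and nzG: "\<forall>z\<in>S. A z \<noteq> 0 \<or> B z \<noteq> 0 \<or> C z \<noteq> 0 \<or> D z \<noteq> 0"
  shows "(\<exists>p q. (p,q) \<noteq> (0,0) \<and> (\<forall>z\<in>S. a z * p + b z * q = 0 \<and> c z * p + d z * q = 0 \<and>
                A z * p + B z * q = 0 \<and> C z * p + D z * q = 0)) \<or>
         (\<exists>p q. (p,q) \<noteq> (0,0) \<and> (\<forall>z\<in>S. a z * p + c z * q = 0 \<and> b z * p + d z * q = 0 \<and>
                A z * p + C z * q = 0 \<and> B z * p + D z * q = 0))"
proof -
  have ha: "a holomorphic_on S" using da S by (auto simp: holomorphic_on_open)
  have hb: "b holomorphic_on S" using db S by (auto simp: holomorphic_on_open)
  have hc: "c holomorphic_on S" using dc S by (auto simp: holomorphic_on_open)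
  have hd: "d holomorphic_on S" using dd S by (auto simp: holomorphic_on_open)
  obtain z0 where z0: "z0 \<in> S" "a z0 \<noteq> 0 \<or> b z0 \<noteq> 0 \<or> c z0 \<noteq> 0 \<or> d z0 \<noteq> 0"
  proof (rule ccontr)
    assume "\<not> thesis"
    hence all0: "\<forall>z\<in>S. a z = 0 \<and> b z = 0 \<and> c z = 0 \<and> d z = 0" using that by blast
    obtain z1 where z1: "z1 \<in> S" using S(3) by blast
    have "A z1 = 0" by (rule deriv_zero_of_zero[of a _ z1 S]) (use da z1 S all0 in auto)
    moreover have "B z1 = 0" by (rule deriv_zero_of_zero[of b _ z1 S]) (use db z1 S all0 in auto)
    moreover have "C z1 = 0" by (rule deriv_zero_of_zero[of c _ z1 S]) (use dc z1 S all0 in auto)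
    moreover have "D z1 = 0" by (rule deriv_zero_of_zero[of d _ z1 S]) (use dd z1 S all0 in auto)
    ultimately show False using nzG z1 by auto
  qed
  define R1 where "R1 z = a z * B z - b z * A z" for z
  define R2 where "R2 z = c z * D z - d z * C z" for z
  define C1 where "C1 z = a z * C z - c z * A z" for z
  define C2 where "C2 z = b z * D z - d z * B z" for z
  have hR1: "R1 holomorphic_on S" unfolding R1_def using ha hb hA hB by (intro holomorphic_intros)
  have hR2: "R2 holomorphic_on S" unfolding R2_def using hc hd hC hD by (intro holomorphic_intros)
  have hC1: "C1 holomorphic_on S" unfolding C1_def using ha hc hA hC by (intro holomorphic_intros)
  have hC2: "C2 holomorphic_on S" unfolding C2_def using hb hd hB hD by (intro holomorphic_intros)
  have P: "\<forall>z\<in>S. R1 z * C1 z = 0" "\<forall>z\<in>S. R1 z * C2 z = 0" "\<forall>z\<in>S. R2 z * C1 z = 0" "\<forall>z\<in>S. R2 z * C2 z = 0"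
  proof -
    { fix z assume zS: "z \<in> S"
      note pr = prods[OF det[rule_format, OF zS] i2[rule_format, OF zS] detG[rule_format, OF zS]]
      have "R1 z * C1 z = 0" "R1 z * C2 z = 0" "R2 z * C1 z = 0" "R2 z * C2 z = 0"
        unfolding R1_def R2_def C1_def C2_def using pr by auto }
    thus "\<forall>z\<in>S. R1 z * C1 z = 0" "\<forall>z\<in>S. R1 z * C2 z = 0" "\<forall>z\<in>S. R2 z * C1 z = 0" "\<forall>z\<in>S. R2 z * C2 z = 0"
      by auto
  qed
  show ?thesis
  proof (cases "\<forall>z\<in>S. R1 z = 0 \<and> R2 z = 0")
    case True
    have wr1: "\<forall>z\<in>S. a z * B z = b z * A z" and wr2: "\<forall>z\<in>S. c z * D z = d z * C z"
      using True by (auto simp: R1_def R2_def)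
    show ?thesis using KER[OF S(1,2) z0(1) da db dc dd det wr1 wr2 z0(2)] by blast
  next
    case False
    then obtain z1 where z1: "z1 \<in> S" "R1 z1 \<noteq> 0 \<or> R2 z1 \<noteq> 0" by blast
    have "(\<forall>z\<in>S. C1 z = 0) \<and> (\<forall>z\<in>S. C2 z = 0)"
    proof (cases "R1 z1 \<noteq> 0")
      case True
      show ?thesis using holo_zero_prod[OF hR1 hC1 S(1,2) P(1) z1(1) True]
          holo_zero_prod[OF hR1 hC2 S(1,2) P(2) z1(1) True] by blast
    next
      case False
      hence T: "R2 z1 \<noteq> 0" using z1 by blast
      show ?thesis using holo_zero_prod[OF hR2 hC1 S(1,2) P(3) z1(1) T]
          holo_zero_prod[OF hR2 hC2 S(1,2) P(4) z1(1) T] by blast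
    qed
    hence wr1: "\<forall>z\<in>S. a z * C z = c z * A z" and wr2: "\<forall>z\<in>S. b z * D z = d z * B z"
      by (auto simp: C1_def C2_def)
    have det': "\<forall>z\<in>S. a z * d z = c z * b z" using det by (auto simp: mult.commute)
    have z0': "a z0 \<noteq> 0 \<or> c z0 \<noteq> 0 \<or> b z0 \<noteq> 0 \<or> d z0 \<noteq> 0" using z0 by blast
    show ?thesis using KER[OF S(1,2) z0(1) da dc db dd det' wr1 wr2 z0'] by blast
  qed
qed


lemma cdecomp: "Re v *\<^sub>R (1::complex) + Im v *\<^sub>R \<i> = v"
  by (simp add: complex_eq_iff)

lemma lin_decomp: assumes "linear L" shows "L v = Re v *\<^sub>R L 1 + Im v *\<^sub>R L \<i>"
proof -
  have "L v = L (Re v *\<^sub>R 1 + Im v *\<^sub>R \<i>)" by (simp only: cdecomp)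
  also have "\<dots> = Re v *\<^sub>R L 1 + Im v *\<^sub>R L \<i>" using assms by (simp add: linear_add linear_cmul)
  finally show ?thesis .
qed
lemma finishJ:
  assumes "linear J" "\<forall>x. J (J x) = - x" "linear L" "J (L 1) = L \<i>"
  shows "L (\<i> * v) = J (L v)"
proof -
  have j2: "J (L \<i>) = - L 1" using assms(2) unfolding assms(4)[symmetric] by simp
  have "L (\<i> * v) = Re (\<i> * v) *\<^sub>R L 1 + Im (\<i> * v) *\<^sub>R L \<i>" by (rule lin_decomp[OF assms(3)])
  also have "\<dots> = Re v *\<^sub>R J (L 1) + Im v *\<^sub>R J (L \<i>)"
    by (simp add: assms(4) j2)
  also have "\<dots> = J (Re v *\<^sub>R L 1 + Im v *\<^sub>R L \<i>)" using assms(1) by (simp add: linear_add linear_cmul)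
  also have "\<dots> = J (L v)" using lin_decomp[OF assms(3), of v] by (rule arg_cong[where f=J, OF sym])
  finally show ?thesis .
qed

definition cF :: "real^4 \<Rightarrow> real^4 \<Rightarrow> 4 \<Rightarrow> complex" where
  "cF a b k = of_real (a $ k) - \<i> * of_real (b $ k)"

lemma dF_aux: "complex_of_real ((Re v *\<^sub>R x + Im v *\<^sub>R y) $ k) - \<i> * complex_of_real ((Re (\<i> * v) *\<^sub>R x + Im (\<i> * v) *\<^sub>R y) $ k) = cF x y k * v"
  unfolding cF_def by (simp add: complex_eq_iff algebra_simps)
lemma dF:
  assumes g: "(g has_derivative L) (at z)" and lin: "linear L"
    and h: "(h has_derivative (\<lambda>v. L (\<i> * v))) (at z)"
  shows "((\<lambda>z. cF (g z) (h z) k) has_field_derivative cF (L 1) (L \<i>) k) (at z)"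
proof -
  have g1: "((\<lambda>z. complex_of_real (g z $ k)) has_derivative (\<lambda>v. complex_of_real (L v $ k))) (at z)"
    by (rule bounded_linear.has_derivative[OF bounded_linear_of_real
          bounded_linear.has_derivative[OF bounded_linear_vec_nth g]])
  have h1: "((\<lambda>z. complex_of_real (h z $ k)) has_derivative (\<lambda>v. complex_of_real (L (\<i> * v) $ k))) (at z)"
    by (rule bounded_linear.has_derivative[OF bounded_linear_of_real
          bounded_linear.has_derivative[OF bounded_linear_vec_nth h]])
  have "((\<lambda>z. cF (g z) (h z) k) has_derivative
        (\<lambda>v. complex_of_real (L v $ k) - \<i> * complex_of_real (L (\<i> * v) $ k))) (at z)"
    unfolding cF_def by (intro has_derivative_diff g1 has_derivative_mult_right h1)
  moreover have "(\<lambda>v. complex_of_real (L v $ k) - \<i> * complex_of_real (L (\<i> * v) $ k)) = (\<lambda>v. cF (L 1) (L \<i>) k * v)"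
  proof
    fix v
    have e1: "L v = Re v *\<^sub>R L 1 + Im v *\<^sub>R L \<i>" by (rule lin_decomp[OF lin])
    have e2: "L (\<i> * v) = Re (\<i> * v) *\<^sub>R L 1 + Im (\<i> * v) *\<^sub>R L \<i>" by (rule lin_decomp[OF lin])
    show "complex_of_real (L v $ k) - \<i> * complex_of_real (L (\<i> * v) $ k) = cF (L 1) (L \<i>) k * v"
      unfolding e1 e2 by (rule dF_aux)
  qed
  ultimately show ?thesis by (simp add: has_field_derivative_def)
qed
definition ma where "ma a b = cF a b 1 + \<i> * cF a b 2"
definition mb where "mb a b = cF a b 3 + \<i> * cF a b 4"
definition mc where "mc a b = - (cF a b 3 - \<i> * cF a b 4)"
definition md where "md a b = cF a b 1 - \<i> * cF a b 2"

lemma inner4: "(x::real^4) \<bullet> y = x$1 * y$1 + x$2 * y$2 + x$3 * y$3 + x$4 * y$4"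
  by (simp add: inner_vec_def sum_4)

lemma mdet0: assumes "norm a = norm b" "a \<bullet> b = 0" shows "ma a b * md a b = mb a b * mc a b"
proof -
  have n: "(a$1)^2 + (a$2)^2 + (a$3)^2 + (a$4)^2 = (b$1)^2 + (b$2)^2 + (b$3)^2 + (b$4)^2"
    using assms(1) by (metis norm4)
  have i: "a$1 * b$1 + a$2 * b$2 + a$3 * b$3 + a$4 * b$4 = 0" using assms(2) by (simp add: inner4)
  show ?thesis using n i unfolding ma_def mb_def mc_def md_def cF_def
    by (simp add: complex_eq_iff algebra_simps power2_eq_square)
qed

lemma mK: "ma a b * p + mb a b * q = K1 p q a - \<i> * K1 p q b"
  "mc a b * p + md a b * q = K2 p q a - \<i> * K2 p q b"
  "ma a b * p + mc a b * q = L1 p q a - \<i> * L1 p q b"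
  "mb a b * p + md a b * q = L2 p q a - \<i> * L2 p q b"
  by (simp_all add: ma_def mb_def mc_def md_def cF_def K1_def K2_def L1_def L2_def W_def V_def complex_eq_iff algebra_simps)

lemma mnz: assumes "ma a b = 0" "mb a b = 0" "mc a b = 0" "md a b = 0" shows "a = 0"
  using assms unfolding ma_def mb_def mc_def md_def cF_def
  by (simp add: complex_eq_iff vec4_eq)
theorem mainTheorem9:
  fixes U :: "complex set" and g h :: "complex \<Rightarrow> real^4"
  assumes "simply_connected U"
    and "conformal_minimal_immersion U g"
    and "\<forall>z\<in>U. (h has_derivative (\<lambda>v. dmap g z (\<i> * v))) (at z)"
    and "\<forall>z\<in>U. g z \<bullet> h z = 0"
    and "\<forall>z\<in>U. norm (g z) = norm (h z)"
  shows "\<exists>JJ :: real^4 \<Rightarrow> real^4. linear JJ \<and> (\<forall>x. norm (JJ x) = norm x) \<and>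
           (\<forall>x. JJ (JJ x) = - x) \<and>
           (\<forall>z\<in>U. \<forall>v. dmap g z (\<i> * v) = JJ (dmap g z v)) \<and>
           (\<forall>z\<in>U. h z = JJ (g z))"
proof (cases "U = {}")
  case True
  have ne: "(1::complex, 0::complex) \<noteq> (0,0)" by simp
  obtain J :: "real^4 \<Rightarrow> real^4" where J: "linear J" "\<forall>x. norm (J x) = norm x" "\<forall>x. J (J x) = - x"
    using JR_main[OF ne] by blast
  show ?thesis by (rule exI[of _ J]) (simp add: J True)
next
  case Une: False
  have ci: "conformal_immersion U g" using assms(2) by (simp add: conformal_minimal_immersion_def)
  have oU: "open U" using ci by (simp add: conformal_immersion_def)
  have cU: "connected U" using assms(1) by (rule simply_connected_imp_connected)
  have gdiff: "\<forall>z\<in>U. g differentiable (at z)" and gconf1: "\<forall>z\<in>U. norm (dmap g z 1) = norm (dmap g z \<i>)"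
    and gconf2: "\<forall>z\<in>U. dmap g z 1 \<bullet> dmap g z \<i> = 0" and gnz: "\<forall>z\<in>U. dmap g z 1 \<noteq> 0"
    using ci by (auto simp: conformal_immersion_def)
  have gd: "(g has_derivative dmap g z) (at z)" if "z \<in> U" for z
    using gdiff that by (simp add: dmap_def frechet_derivative_works)
  have lin: "linear (dmap g z)" if "z \<in> U" for z using gd[OF that] by (rule has_derivative_linear)
  have dFk: "((\<lambda>z. cF (g z) (h z) k) has_field_derivative cF (dmap g z 1) (dmap g z \<i>) k) (at z)"
    if "z \<in> U" for z k
    by (rule dF[OF gd[OF that] lin[OF that]]) (use assms(3) that in blast)
  have hFd: "(\<lambda>z. cF (dmap g z 1) (dmap g z \<i>) k) holomorphic_on U" for k
  proof -
    have "(\<lambda>z. cF (g z) (h z) k) holomorphic_on U"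
      using dFk oU by (auto simp: holomorphic_on_open)
    hence "deriv (\<lambda>z. cF (g z) (h z) k) holomorphic_on U" using oU by (rule holomorphic_deriv)
    thus ?thesis by (rule holomorphic_transform) (use dFk DERIV_imp_deriv in blast)
  qed
  define a where "a z = ma (g z) (h z)" for z
  define b where "b z = mb (g z) (h z)" for z
  define c where "c z = mc (g z) (h z)" for z
  define d where "d z = md (g z) (h z)" for z
  define A where "A z = ma (dmap g z 1) (dmap g z \<i>)" for z
  define B where "B z = mb (dmap g z 1) (dmap g z \<i>)" for z
  define C where "C z = mc (dmap g z 1) (dmap g z \<i>)" for z
  define D where "D z = md (dmap g z 1) (dmap g z \<i>)" for z
  have da: "\<forall>z\<in>U. (a has_field_derivative A z) (at z)"
    unfolding a_def A_def ma_def by (auto intro!: derivative_eq_intros dFk)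
  have db: "\<forall>z\<in>U. (b has_field_derivative B z) (at z)"
    unfolding b_def B_def mb_def by (auto intro!: derivative_eq_intros dFk)
  have dc: "\<forall>z\<in>U. (c has_field_derivative C z) (at z)"
    unfolding c_def C_def mc_def by (auto intro!: derivative_eq_intros dFk)
  have dd: "\<forall>z\<in>U. (d has_field_derivative D z) (at z)"
    unfolding d_def D_def md_def by (auto intro!: derivative_eq_intros dFk)
  have hA: "A holomorphic_on U" unfolding A_def ma_def by (intro holomorphic_intros hFd)
  have hB: "B holomorphic_on U" unfolding B_def mb_def by (intro holomorphic_intros hFd)
  have hC: "C holomorphic_on U" unfolding C_def mc_def by (intro holomorphic_intros hFd)
  have hD: "D holomorphic_on U" unfolding D_def md_def by (intro holomorphic_intros hFd)
  have det: "\<forall>z\<in>U. a z * d z = b z * c z"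
    unfolding a_def b_def c_def d_def using mdet0 assms(4,5) by auto
  have detG: "\<forall>z\<in>U. A z * D z = B z * C z"
    unfolding A_def B_def C_def D_def using mdet0 gconf1 gconf2 by auto
  have i2: "\<forall>z\<in>U. a z * D z + A z * d z = b z * C z + B z * c z"
  proof
    fix z assume zU: "z \<in> U"
    have "((\<lambda>z. a z * d z - b z * c z) has_field_derivative (a z * D z + A z * d z) - (b z * C z + B z * c z)) (at z)"
      using da db dc dd zU by (auto intro!: derivative_eq_intros simp: algebra_simps)
    hence "(a z * D z + A z * d z) - (b z * C z + B z * c z) = 0"
      by (rule deriv_zero_of_zero[OF _ oU zU]) (use det in auto)
    thus "a z * D z + A z * d z = b z * C z + B z * c z" by simp
  qed
  have nzG: "\<forall>z\<in>U. A z \<noteq> 0 \<or> B z \<noteq> 0 \<or> C z \<noteq> 0 \<or> D z \<noteq> 0"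
    unfolding A_def B_def C_def D_def using mnz gnz by blast
  note core = CORE[OF oU cU Une da db dc dd hA hB hC hD det i2 detG nzG]
  show ?thesis
  proof (rule disjE[OF core])
    assume "\<exists>p q. (p,q) \<noteq> (0,0) \<and> (\<forall>z\<in>U. a z * p + b z * q = 0 \<and> c z * p + d z * q = 0 \<and>
                A z * p + B z * q = 0 \<and> C z * p + D z * q = 0)"
    then obtain p q where pq: "(p,q) \<noteq> (0,0)" and ker: "\<forall>z\<in>U. a z * p + b z * q = 0 \<and> c z * p + d z * q = 0 \<and>
                A z * p + B z * q = 0 \<and> C z * p + D z * q = 0" by blast
    obtain J where J: "linear J" "\<forall>x. norm (J x) = norm x" "\<forall>x. J (J x) = - x"
     "\<forall>a b. K1 p q (a::real^4) = \<i> * K1 p q b \<and> K2 p q a = \<i> * K2 p q b \<longrightarrow> J a = b"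
      using JR_main[OF pq] by blast
    have j1: "J (g z) = h z" if "z \<in> U" for z
      using ker that J(4) unfolding a_def b_def c_def d_def mK by auto
    have j2: "J (dmap g z 1) = dmap g z \<i>" if "z \<in> U" for z
      using ker that J(4) unfolding A_def B_def C_def D_def mK by auto
    show ?thesis
      using J(1,2,3) j1 j2 finishJ[OF J(1,3) lin] by metis
  next
    assume "\<exists>p q. (p,q) \<noteq> (0,0) \<and> (\<forall>z\<in>U. a z * p + c z * q = 0 \<and> b z * p + d z * q = 0 \<and>
                A z * p + C z * q = 0 \<and> B z * p + D z * q = 0)"
    then obtain p q where pq: "(p,q) \<noteq> (0,0)" and ker: "\<forall>z\<in>U. a z * p + c z * q = 0 \<and> b z * p + d z * q = 0 \<and>
                A z * p + C z * q = 0 \<and> B z * p + D z * q = 0" by blast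
    obtain J where J: "linear J" "\<forall>x. norm (J x) = norm x" "\<forall>x. J (J x) = - x"
     "\<forall>a b. L1 p q a = \<i> * L1 p q b \<and> L2 p q a = \<i> * L2 p q b \<longrightarrow> J a = b"
      using JC_main[OF pq] by blast
    have j1: "J (g z) = h z" if "z \<in> U" for z
      using ker that J(4) unfolding a_def b_def c_def d_def mK by auto
    have j2: "J (dmap g z 1) = dmap g z \<i>" if "z \<in> U" for z
      using ker that J(4) unfolding A_def B_def C_def D_def mK by auto
    show ?thesis
      using J(1,2,3) j1 j2 finishJ[OF J(1,3) lin] by metis
  qed
qed

end
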